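(* Let $K$ be a graph with a designated set of edges called virtual edges, let $\Sigma(K)$ be the set of distinct endpoint-pairs of its virtual edges, and let $A(K)$ be the set of vertices $v$ of $K$ such that $v$ is universal in $K$, $v$ is incident with a pair of parallel edges, and every virtual edge of $K$ is incident with $v$. If $K$ admits a half-edge $2$-colouring making it a W-cone in which every virtual edge is bichromatic, then the apex of every such W-cone colouring belongs to $A(K)$. Moreover: (1) if $|\Sigma(K)|\ge 2$, then $A(K)$ is a singleton; (2) if $\Sigma(K)=\{\{x,y\}\}$, then $A(K)\subseteq\{x,y\}$.
   Context: Graphs may have parallel edges but no loops. A vertex is universal if it is adjacent to all other vertices. A half-edge $2$-colouring $d$ assigns to each pair $(e,w)$ with $w$ an endpoint of edge $e$ a colour in $\{0,1\}$ (0 = blue, 1 = red). An edge $e=uv$ is bichromatic if $d(e,u)\neq d(e,v)$ and monochromatic otherwise; $E_b$, $E_m$ denote the bichromatic and monochromatic edge sets; standing convention: monochromatic edges are blue at both ends. A graph is matching-covered if every edge lies in some perfect matching. A W-cone is a half-edge $2$-coloured matching-covered graph $(K,d)$ containing a universal vertex $v$ (the apex) such that the set of edges incident with $v$ equals $E_b(K)$, $E(K-v)=E_m(K)$, and every vertex $u$ is incident with an edge $e$ with $d(e,u)=1$. *)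

theory Defs
  imports Main
begin

text \<open>A finite multigraph without loops: vertex set V, edge set E, and an
  endpoint map; each edge has exactly two distinct endpoints in V.
  Parallel edges are distinct edges with the same endpoint set.\<close>
definition multigraph :: "'v set \<Rightarrow> 'e set \<Rightarrow> ('e \<Rightarrow> 'v set) \<Rightarrow> bool" where
  "multigraph V E ends \<longleftrightarrow> finite V \<and> finite E \<and>
     (\<forall>e\<in>E. ends e \<subseteq> V \<and> card (ends e) = 2)"

definition universal :: "'v set \<Rightarrow> 'e set \<Rightarrow> ('e \<Rightarrow> 'v set) \<Rightarrow> 'v \<Rightarrow> bool" where
  "universal V E ends v \<longleftrightarrow> v \<in> V \<and>
     (\<forall>u\<in>V. u \<noteq> v \<longrightarrow> (\<exists>e\<in>E. ends e = {u, v}))"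

definition perfect_matching :: "'v set \<Rightarrow> 'e set \<Rightarrow> ('e \<Rightarrow> 'v set) \<Rightarrow> 'e set \<Rightarrow> bool" where
  "perfect_matching V E ends M \<longleftrightarrow> M \<subseteq> E \<and>
     (\<forall>u\<in>V. \<exists>!e. e \<in> M \<and> u \<in> ends e)"

definition matching_covered :: "'v set \<Rightarrow> 'e set \<Rightarrow> ('e \<Rightarrow> 'v set) \<Rightarrow> bool" where
  "matching_covered V E ends \<longleftrightarrow>
     (\<forall>e\<in>E. \<exists>M. perfect_matching V E ends M \<and> e \<in> M)"

text \<open>Half-edge 2-colouring d: d e w is the colour of the half-edge (e,w);
  False = 0 = blue, True = 1 = red.\<close>
definition bichromatic :: "('e \<Rightarrow> 'v set) \<Rightarrow> ('e \<Rightarrow> 'v \<Rightarrow> bool) \<Rightarrow> 'e \<Rightarrow> bool" where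
  "bichromatic ends d e \<longleftrightarrow> (\<exists>u w. ends e = {u, w} \<and> d e u \<noteq> d e w)"

text \<open>W-cone with apex a (including the standing convention that
  monochromatic edges are blue at both ends).\<close>
definition wcone :: "'v set \<Rightarrow> 'e set \<Rightarrow> ('e \<Rightarrow> 'v set) \<Rightarrow> ('e \<Rightarrow> 'v \<Rightarrow> bool) \<Rightarrow> 'v \<Rightarrow> bool" where
  "wcone V E ends d a \<longleftrightarrow>
     matching_covered V E ends \<and>
     universal V E ends a \<and>
     {e\<in>E. a \<in> ends e} = {e\<in>E. bichromatic ends d e} \<and>
     {e\<in>E. a \<notin> ends e} = {e\<in>E. \<not> bichromatic ends d e} \<and>
     (\<forall>e\<in>E. \<not> bichromatic ends d e \<longrightarrow> (\<forall>w\<in>ends e. \<not> d e w)) \<and>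
     (\<forall>u\<in>V. \<exists>e\<in>E. u \<in> ends e \<and> d e u)"

definition virt_pairs :: "('e \<Rightarrow> 'v set) \<Rightarrow> 'e set \<Rightarrow> 'v set set" where
  "virt_pairs ends X = ends ` X"

definition apex_cands :: "'v set \<Rightarrow> 'e set \<Rightarrow> ('e \<Rightarrow> 'v set) \<Rightarrow> 'e set \<Rightarrow> 'v set" where
  "apex_cands V E ends X = {v\<in>V. universal V E ends v \<and>
     (\<exists>e1\<in>E. \<exists>e2\<in>E. e1 \<noteq> e2 \<and> ends e1 = ends e2 \<and> v \<in> ends e1) \<and>
     (\<forall>e\<in>X. v \<in> ends e)}"

end

theory Submission
  imports Defs
begin

lemma card2_eq:
  assumes "card S = 2" "a \<in> S" "b \<in> S" "a \<noteq> b"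
  shows "S = {a, b}"
proof -
  obtain p q where "S = {p, q}" "p \<noteq> q" using assms(1) card_2_iff by metis
  then show ?thesis using assms by auto
qed

lemma card2_other:
  assumes "card S = 2" "a \<in> S"
  obtains b where "S = {a, b}" "b \<noteq> a"
proof -
  obtain p q where "S = {p, q}" "p \<noteq> q" using assms(1) card_2_iff by metis
  then show ?thesis using assms that by auto
qed

lemma part1:
  assumes mg: "multigraph V E ends"
    and X: "X \<subseteq> E"
    and wc: "wcone V E ends d a" and bx: "\<forall>e\<in>X. bichromatic ends d e"
  shows "a \<in> apex_cands V E ends X"
proof -
  have univ: "universal V E ends a" and
    eq1: "{e\<in>E. a \<in> ends e} = {e\<in>E. bichromatic ends d e}" and
    mono: "\<forall>e\<in>E. \<not> bichromatic ends d e \<longrightarrow> (\<forall>w\<in>ends e. \<not> d e w)" and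
    red: "\<forall>u\<in>V. \<exists>e\<in>E. u \<in> ends e \<and> d e u"
    using wc unfolding wcone_def by auto
  have aV: "a \<in> V" using univ unfolding universal_def by auto
  have bi: "\<And>e. e \<in> E \<Longrightarrow> a \<in> ends e \<longleftrightarrow> bichromatic ends d e" using eq1 by blast
  have c2: "\<And>e. e \<in> E \<Longrightarrow> card (ends e) = 2 \<and> ends e \<subseteq> V" using mg unfolding multigraph_def by auto
  obtain e where e: "e \<in> E" "a \<in> ends e" "d e a" using red aV by blast
  obtain b where b: "ends e = {a, b}" "b \<noteq> a"
    by (rule card2_other[of "ends e" a]) (use c2[OF e(1)] e(2) in auto)
  have "bichromatic ends d e" using bi e by auto
  then obtain u w where uw: "ends e = {u, w}" "d e u \<noteq> d e w" unfolding bichromatic_def by blast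
  have "{u, w} = {a, b}" using uw(1) b(1) by simp
  then have "(u = a \<and> w = b) \<or> (u = b \<and> w = a)" by (simp add: doubleton_eq_iff)
  then have "d e a \<noteq> d e b" using uw(2) by blast
  then have nb: "\<not> d e b" using e by auto
  have bV: "b \<in> V" using c2 e b by auto
  obtain e' where e': "e' \<in> E" "b \<in> ends e'" "d e' b" using red bV by blast
  have "bichromatic ends d e'" using mono e' by auto
  then have ae': "a \<in> ends e'" using bi e' by auto
  have "ends e' = {a, b}" by (rule card2_eq) (use c2[OF e'(1)] e'(2) ae' b(2) in auto)
  moreover have "e' \<noteq> e" using nb e' by auto
  ultimately have par: "\<exists>e1\<in>E. \<exists>e2\<in>E. e1 \<noteq> e2 \<and> ends e1 = ends e2 \<and> a \<in> ends e1"
  proof (intro bexI conjI)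
    show "e \<noteq> e'" using \<open>e' \<noteq> e\<close> by simp
    show "ends e = ends e'" using b(1) \<open>ends e' = {a, b}\<close> by simp
  qed (use e e' in simp_all)
  have "\<forall>e\<in>X. a \<in> ends e" using bx bi X by blast
  then show ?thesis unfolding apex_cands_def using aV univ par by blast
qed

theorem mainTheorem17:
  fixes V :: "'v set" and E :: "'e set" and ends :: "'e \<Rightarrow> 'v set" and X :: "'e set"
  assumes "multigraph V E ends"
    and "X \<subseteq> E"
    and "\<exists>d a. wcone V E ends d a \<and> (\<forall>e\<in>X. bichromatic ends d e)"
  shows "(\<forall>d a. wcone V E ends d a \<and> (\<forall>e\<in>X. bichromatic ends d e)
            \<longrightarrow> a \<in> apex_cands V E ends X)
     \<and> (card (virt_pairs ends X) \<ge> 2 \<longrightarrow> (\<exists>a. apex_cands V E ends X = {a}))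
     \<and> (\<forall>x y. virt_pairs ends X = {{x, y}} \<longrightarrow> apex_cands V E ends X \<subseteq> {x, y})"
proof (intro conjI)
  show P1: "\<forall>d a. wcone V E ends d a \<and> (\<forall>e\<in>X. bichromatic ends d e)
            \<longrightarrow> a \<in> apex_cands V E ends X"
  proof (intro allI impI)
    fix d a assume h: "wcone V E ends d a \<and> (\<forall>e\<in>X. bichromatic ends d e)"
    show "a \<in> apex_cands V E ends X" using part1[OF assms(1,2), of d a] h by blast
  qed
  have c2: "\<And>e. e \<in> X \<Longrightarrow> card (ends e) = 2" using assms(1,2) unfolding multigraph_def by auto
  show "card (virt_pairs ends X) \<ge> 2 \<longrightarrow> (\<exists>a. apex_cands V E ends X = {a})"
  proof
    assume cx: "card (virt_pairs ends X) \<ge> 2"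
    obtain a where a: "a \<in> apex_cands V E ends X" using P1 assms(3) by blast
    obtain p q where pq: "p \<in> virt_pairs ends X" "q \<in> virt_pairs ends X" "p \<noteq> q"
    proof -
      have "\<not> (\<forall>p\<in>virt_pairs ends X. \<forall>q\<in>virt_pairs ends X. p = q)"
      proof
        assume "\<forall>p\<in>virt_pairs ends X. \<forall>q\<in>virt_pairs ends X. p = q"
        moreover have "finite (virt_pairs ends X)" using assms(1,2) unfolding multigraph_def virt_pairs_def
          by (meson finite_imageI finite_subset)
        ultimately have "card (virt_pairs ends X) \<le> Suc 0" using card_le_Suc0_iff_eq by blast
        then show False using cx by simp
      qed
      then show ?thesis using that by blast
    qed
    obtain ep eq where ep: "ep \<in> X" "ends ep = p" and eq: "eq \<in> X" "ends eq = q"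
      using pq unfolding virt_pairs_def by auto
    have "apex_cands V E ends X = {a}"
    proof
      show "{a} \<subseteq> apex_cands V E ends X" using a by auto
      show "apex_cands V E ends X \<subseteq> {a}"
      proof
        fix v assume v: "v \<in> apex_cands V E ends X"
        show "v \<in> {a}"
        proof (rule ccontr)
          assume "v \<notin> {a}"
          then have va: "v \<noteq> a" by simp
          have "v \<in> p" "a \<in> p" "v \<in> q" "a \<in> q" using v a ep eq unfolding apex_cands_def by auto
          then have "p = {v, a}" "q = {v, a}" using card2_eq[of p v a] card2_eq[of q v a] c2[OF ep(1)] c2[OF eq(1)] ep(2) eq(2) va by auto
          then show False using pq by simp
        qed
      qed
    qed
    then show "\<exists>a. apex_cands V E ends X = {a}" by blast
  qed
  show "\<forall>x y. virt_pairs ends X = {{x, y}} \<longrightarrow> apex_cands V E ends X \<subseteq> {x, y}"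
  proof (intro allI impI subsetI)
    fix x y v assume h: "virt_pairs ends X = {{x, y}}" and v: "v \<in> apex_cands V E ends X"
    obtain e where "e \<in> X" "ends e = {x, y}" using h unfolding virt_pairs_def
      by (metis imageE insertI1)
    then show "v \<in> {x, y}" using v unfolding apex_cands_def by auto
  qed
qed

end
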